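(* Let $2 \leq d \leq k$ be integers, let $\Sigma_k=\{\sigma_1,\ldots,\sigma_k\}$ and $\Sigma_d=\{\sigma_1,\ldots,\sigma_d\}$. Consider two users over the alphabet $\Sigma_k$, where user 1 has confusion graph $G_1=(\Sigma_k,\{ab \mid a\in\Sigma_k,\ b\in\Sigma_k\setminus\Sigma_d,\ a\neq b\})$ (the complete graph on $\Sigma_k$ minus a clique on $\Sigma_d$) and user 2 has the empty confusion graph $G_2=(\Sigma_k,\emptyset)$. Then for every $\alpha\in[0,1]$ the rate vector $(\alpha\log_2 d,\ (1-\alpha)\log_2 k)$ is optimal.
   Context: Setting: a sender broadcasts a word of length $n$ over a finite alphabet $\Sigma$ to $r$ users; user $i$ has a confusion graph $G_i$ on vertex set $\Sigma$, where $ab$ is an edge iff user $i$ cannot distinguish letters $a$ and $b$. Two words $x,y\in\Sigma^n$ are distinguishable by user $i$ if there is a coordinate $t$ with $x_t\neq y_t$ and $x_ty_t$ not an edge of $G_i$. A vector $(m_1,\ldots,m_r)$ of positive integers is feasible for length $n$ if there is a map $E:[m_1]\times\cdots\times[m_r]\to\Sigma^n$ such that for every $i$ and all tuples $a,a'$ with $a_i\neq a'_i$, the words $E(a)$ and $E(a')$ are distinguishable by user $i$ (so user $i$ can decode his message $a_i$). A rate vector $(R_1,\ldots,R_r)$ is feasible if there is a sequence of feasible vectors $(m_1^{(n)},\ldots,m_r^{(n)})$ for lengths $n\to\infty$ with $R_i=\lim_{n\to\infty}\frac{\log_2 m_i^{(n)}}{n}$ for all $i$. For two users, a rate vector is optimal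 if it is feasible and no user can increase his rate while the other user keeps the same rate (i.e. no feasible $(R_1',R_2)$ with $R_1'>R_1$ and no feasible $(R_1,R_2')$ with $R_2'>R_2$). *)

theory Defs
  imports "HOL-Analysis.Analysis"
begin

text \<open>Confusion graphs are symmetric relations on the alphabet: G a b means that
  the letters a and b cannot be distinguished. Users are indexed by 0,...,r-1.\<close>

definition words :: "'a set \<Rightarrow> nat \<Rightarrow> 'a list set" where
  "words \<Sigma> n = {x. length x = n \<and> set x \<subseteq> \<Sigma>}"

definition distinguishable :: "('a \<Rightarrow> 'a \<Rightarrow> bool) \<Rightarrow> 'a list \<Rightarrow> 'a list \<Rightarrow> bool" where
  "distinguishable G x y \<longleftrightarrow>
     (\<exists>t < min (length x) (length y). x ! t \<noteq> y ! t \<and> \<not> G (x ! t) (y ! t))"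

definition feasible_vec ::
  "'a set \<Rightarrow> (nat \<Rightarrow> 'a \<Rightarrow> 'a \<Rightarrow> bool) \<Rightarrow> nat \<Rightarrow> nat \<Rightarrow> (nat \<Rightarrow> nat) \<Rightarrow> bool" where
  "feasible_vec \<Sigma> G r n m \<longleftrightarrow>
     (\<forall>i<r. 0 < m i) \<and>
     (\<exists>E :: (nat \<Rightarrow> nat) \<Rightarrow> 'a list.
        (\<forall>a \<in> (\<Pi>\<^sub>E i\<in>{..<r}. {..<m i}). E a \<in> words \<Sigma> n) \<and>
        (\<forall>i<r. \<forall>a \<in> (\<Pi>\<^sub>E i\<in>{..<r}. {..<m i}). \<forall>a' \<in> (\<Pi>\<^sub>E i\<in>{..<r}. {..<m i}).
            a i \<noteq> a' i \<longrightarrow> distinguishable (G i) (E a) (E a')))"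

definition feasible_rate ::
  "'a set \<Rightarrow> (nat \<Rightarrow> 'a \<Rightarrow> 'a \<Rightarrow> bool) \<Rightarrow> nat \<Rightarrow> (nat \<Rightarrow> real) \<Rightarrow> bool" where
  "feasible_rate \<Sigma> G r R \<longleftrightarrow>
     (\<exists>(len :: nat \<Rightarrow> nat) (M :: nat \<Rightarrow> nat \<Rightarrow> nat).
        filterlim len at_top sequentially \<and>
        (\<forall>j. feasible_vec \<Sigma> G r (len j) (M j)) \<and>
        (\<forall>i<r. (\<lambda>j. log 2 (real (M j i)) / real (len j)) \<longlonglongrightarrow> R i))"

definition feasible_rate2 ::
  "'a set \<Rightarrow> ('a \<Rightarrow> 'a \<Rightarrow> bool) \<Rightarrow> ('a \<Rightarrow> 'a \<Rightarrow> bool) \<Rightarrow> real \<Rightarrow> real \<Rightarrow> bool" where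
  "feasible_rate2 \<Sigma> G1 G2 R1 R2 \<longleftrightarrow>
     feasible_rate \<Sigma> (\<lambda>i. if i = 0 then G1 else G2) 2 (\<lambda>i. if i = 0 then R1 else R2)"

definition optimal2 ::
  "'a set \<Rightarrow> ('a \<Rightarrow> 'a \<Rightarrow> bool) \<Rightarrow> ('a \<Rightarrow> 'a \<Rightarrow> bool) \<Rightarrow> real \<Rightarrow> real \<Rightarrow> bool" where
  "optimal2 \<Sigma> G1 G2 R1 R2 \<longleftrightarrow>
     feasible_rate2 \<Sigma> G1 G2 R1 R2 \<and>
     \<not> (\<exists>R1'. R1' > R1 \<and> feasible_rate2 \<Sigma> G1 G2 R1' R2) \<and>
     \<not> (\<exists>R2'. R2' > R2 \<and> feasible_rate2 \<Sigma> G1 G2 R1 R2')"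

end

theory Submission
  imports Defs
begin


lemma inc_powr:
  fixes a b w g :: real
  assumes "0 \<le> a" "a \<le> b" "0 \<le> w" "1 \<le> g"
  shows "(a + w) powr g - a powr g \<le> (b + w) powr g - b powr g"
proof (rule DERIV_nonneg_imp_increasing_open[OF assms(2)])
  fix x assume x: "a < x" "x < b"
  hence xp: "0 < x" using assms by simp
  have "DERIV (\<lambda>s. (s + w) powr g - s powr g) x :> g * (x + w) powr (g - 1) * 1 - g * x powr (g - 1)"
    using xp assms by (auto intro!: derivative_eq_intros)
  moreover have "x powr (g - 1) \<le> (x + w) powr (g - 1)"
    using xp assms by (intro powr_mono2) auto
  hence "0 \<le> g * (x + w) powr (g - 1) * 1 - g * x powr (g - 1)"
    using assms by (simp add: algebra_simps mult_left_mono)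
  ultimately show "\<exists>y. DERIV (\<lambda>s. (s + w) powr g - s powr g) x :> y \<and> 0 \<le> y" by blast
next
  show "continuous_on {a..b} (\<lambda>s. (s + w) powr g - s powr g)"
    using assms by (intro continuous_intros continuous_on_powr') auto
qed

lemma key_sum:
  fixes v :: "'c \<Rightarrow> real" and m g :: real
  assumes "finite C" "\<forall>c\<in>C. m \<le> v c" "0 \<le> m" "1 \<le> g"
  shows "\<forall>s\<ge>m. (\<Sum>c\<in>C. v c powr g - m powr g) \<le> (s + (\<Sum>c\<in>C. v c - m)) powr g - s powr g"
  using assms(1,2)
proof (induction C rule: finite_induct)
  case empty then show ?case by simp
next
  case (insert c C)
  show ?case
  proof (intro allI impI)
    fix s assume s: "m \<le> s"
    have vc: "m \<le> v c" using insert by simp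
    have IH: "(\<Sum>c\<in>C. v c powr g - m powr g) \<le> ((s + (v c - m)) + (\<Sum>c\<in>C. v c - m)) powr g - (s + (v c - m)) powr g"
      using insert s vc by auto
    have I: "(m + (v c - m)) powr g - m powr g \<le> (s + (v c - m)) powr g - s powr g"
      using inc_powr[of m s "v c - m" g] assms s vc by simp
    show "(\<Sum>c\<in>insert c C. v c powr g - m powr g) \<le> (s + (\<Sum>c\<in>insert c C. v c - m)) powr g - s powr g"
      using IH I insert by (simp add: algebra_simps)
  qed
qed

lemma key_ineq:
  fixes v :: "'c \<Rightarrow> real" and m g :: real and d k :: nat
  assumes "finite C" "card C = d" "\<forall>c\<in>C. m \<le> v c" "0 \<le> m" "1 \<le> g" "real d powr g = real k" "1 \<le> d"
  shows "(\<Sum>c\<in>C. v c powr g) + (real k - real d) * m powr g \<le> (\<Sum>c\<in>C. v c) powr g"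
proof -
  have dm: "m \<le> real d * m" using assms(4,7) by (simp add: mult_le_cancel_right1)
  have A: "(\<Sum>c\<in>C. v c powr g - m powr g) \<le> (real d * m + (\<Sum>c\<in>C. v c - m)) powr g - (real d * m) powr g"
    using key_sum[OF assms(1,3,4,5)] dm by blast
  have B: "real d * m + (\<Sum>c\<in>C. v c - m) = (\<Sum>c\<in>C. v c)"
    using assms(2) by (simp add: sum_subtractf)
  have C: "(real d * m) powr g = real k * m powr g"
    using assms(4,6) by (simp add: powr_mult)
  have D: "(\<Sum>c\<in>C. v c powr g - m powr g) = (\<Sum>c\<in>C. v c powr g) - real d * m powr g"
    using assms(2) by (simp add: sum_subtractf)
  show ?thesis using A B C D by (simp add: algebra_simps)
qed

definition UU :: "nat \<Rightarrow> nat \<Rightarrow> nat list set \<Rightarrow> nat list set" where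
  "UU d n W = {z \<in> words {0..<d} n. \<exists>x\<in>W. \<forall>t<n. x!t < d \<longrightarrow> z!t = x!t}"

lemma finite_words: "finite \<Sigma> \<Longrightarrow> finite (words \<Sigma> n)"
  unfolding words_def using finite_lists_length_eq[of \<Sigma> n] by (simp add: conj_commute)

lemma card_words: "finite \<Sigma> \<Longrightarrow> card (words \<Sigma> n) = card \<Sigma> ^ n"
  unfolding words_def using card_lists_length_eq[of \<Sigma> n] by (simp add: conj_commute)

lemma UU_step:
  assumes "W \<subseteq> words {0..<k} (Suc n)" "d \<le> k"
  shows "UU d (Suc n) W = (\<Union>c\<in>{..<d}. (#) c ` UU d n ({x. c#x \<in> W} \<union> (\<Union>c'\<in>{d..<k}. {x. c'#x \<in> W})))"
proof (intro equalityI subsetI)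
  fix z assume z: "z \<in> UU d (Suc n) W"
  then obtain x where x: "x \<in> W" "\<forall>t<Suc n. x!t < d \<longrightarrow> z!t = x!t" and zw: "z \<in> words {0..<d} (Suc n)"
    unfolding UU_def by blast
  obtain c z' where zc: "z = c#z'" using zw unfolding words_def by (cases z) auto
  obtain c' x' where xc: "x = c'#x'" using x assms unfolding words_def by (cases x) auto
  have c: "c < d" "z' \<in> words {0..<d} n" using zw zc unfolding words_def by auto
  have ag: "\<forall>t<n. x'!t < d \<longrightarrow> z'!t = x'!t" using x(2) zc xc by auto
  have "x' \<in> {x. c#x \<in> W} \<union> (\<Union>c'\<in>{d..<k}. {x. c'#x \<in> W})"
  proof (cases "c' < d")
    case True then have "c = c'" using x(2) zc xc by force
    then show ?thesis using x xc by auto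
  next
    case False
    have "c' < k" using x(1) xc assms unfolding words_def by auto
    then show ?thesis using False x xc by auto
  qed
  then have "z' \<in> UU d n ({x. c#x \<in> W} \<union> (\<Union>c'\<in>{d..<k}. {x. c'#x \<in> W}))"
    unfolding UU_def using c ag by blast
  then show "z \<in> (\<Union>c\<in>{..<d}. (#) c ` UU d n ({x. c#x \<in> W} \<union> (\<Union>c'\<in>{d..<k}. {x. c'#x \<in> W})))"
    using zc c by auto
next
  fix z assume "z \<in> (\<Union>c\<in>{..<d}. (#) c ` UU d n ({x. c#x \<in> W} \<union> (\<Union>c'\<in>{d..<k}. {x. c'#x \<in> W})))"
  then obtain c z' where c: "c < d" "z = c#z'" and z': "z' \<in> UU d n ({x. c#x \<in> W} \<union> (\<Union>c'\<in>{d..<k}. {x. c'#x \<in> W}))"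
    by auto
  then obtain x' where x': "x' \<in> {x. c#x \<in> W} \<union> (\<Union>c'\<in>{d..<k}. {x. c'#x \<in> W})"
     "\<forall>t<n. x'!t < d \<longrightarrow> z'!t = x'!t" and zw: "z' \<in> words {0..<d} n"
    unfolding UU_def by blast
  have zw2: "z \<in> words {0..<d} (Suc n)" using zw c unfolding words_def by auto
  show "z \<in> UU d (Suc n) W"
  proof (cases "c#x' \<in> W")
    case True
    have "\<forall>t<Suc n. (c#x')!t < d \<longrightarrow> z!t = (c#x')!t"
      using x'(2) c by (auto simp: less_Suc_eq_0_disj)
    then show ?thesis unfolding UU_def using zw2 True by blast
  next
    case False
    then obtain c' where c': "c' \<in> {d..<k}" "c'#x' \<in> W" using x'(1) by auto
    have "\<forall>t<Suc n. (c'#x')!t < d \<longrightarrow> z!t = (c'#x')!t"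
      using x'(2) c c' by (auto simp: less_Suc_eq_0_disj)
    then show ?thesis unfolding UU_def using zw2 c' by blast
  qed
qed

lemma comb:
  fixes d k :: nat and g :: real
  assumes d: "1 \<le> d" "d \<le> k" and g: "1 \<le> g" "real d powr g = real k"
  shows "W \<subseteq> words {0..<k} n \<Longrightarrow> real (card W) \<le> real (card (UU d n W)) powr g"
proof (induction n arbitrary: W)
  case 0
  have w0: "words {0..<k} 0 = {[]}" unfolding words_def by auto
  show ?case
  proof (cases "W = {}")
    case True then show ?thesis by simp
  next
    case False
    then have "W = {[]}" using 0 w0 by auto
    moreover have "UU d 0 {[]} = {[]}" unfolding UU_def words_def by auto
    ultimately show ?thesis by simp
  qed
next
  case (Suc n)
  define T where "T c = {x. c#x \<in> W}" for c
  define H where "H = (\<Union>c'\<in>{d..<k}. T c')"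
  have Tw: "T c \<subseteq> words {0..<k} n" for c using Suc.prems unfolding T_def words_def by fastforce
  have Hw: "H \<subseteq> words {0..<k} n" using Tw unfolding H_def by auto
  have fin: "finite (words {0..<k} n)" by (simp add: finite_words)
  have finT: "finite (T c)" for c using Tw fin finite_subset by blast
  have finH: "finite H" using Hw fin finite_subset by blast
  define u where "u c = real (card (UU d n (T c \<union> H)))" for c
  have IH: "real (card (T c \<union> H)) \<le> u c powr g" for c
    unfolding u_def using Suc.IH[of "T c \<union> H"] Tw Hw by auto
  have UUeq: "UU d (Suc n) W = (\<Union>c\<in>{..<d}. (#) c ` UU d n (T c \<union> H))"
    unfolding T_def H_def using UU_step[OF Suc.prems d(2)] by simp
  have finUU: "finite (UU d n X)" for X
    by (rule finite_subset[of _ "words {0..<d} n"]) (auto simp: UU_def finite_words)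
  have cardUU: "card (UU d (Suc n) W) = (\<Sum>c<d. card (UU d n (T c \<union> H)))"
    unfolding UUeq
    by (subst card_UN_disjoint) (auto simp: finUU card_image)
  have Wsub: "W \<subseteq> (\<Union>c\<in>{..<k}. (#) c ` T c)"
  proof
    fix x assume x: "x \<in> W"
    then obtain c x' where "x = c#x'" "c < k" using Suc.prems unfolding words_def
      by (cases x) auto
    then show "x \<in> (\<Union>c\<in>{..<k}. (#) c ` T c)" using x unfolding T_def by auto
  qed
  have "card W \<le> card (\<Union>c\<in>{..<k}. (#) c ` T c)"
    by (rule card_mono[OF _ Wsub]) (auto simp: finT)
  also have "\<dots> \<le> (\<Sum>c<k. card ((#) c ` T c))" by (rule card_UN_le) simp
  also have "\<dots> = (\<Sum>c<k. card (T c))" by (simp add: card_image)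
  also have "\<dots> = (\<Sum>c<d. card (T c)) + (\<Sum>c\<in>{d..<k}. card (T c))"
    using d(2) by (metis atLeast0LessThan sum.atLeastLessThan_concat zero_le)
  also have "(\<Sum>c\<in>{d..<k}. card (T c)) \<le> (\<Sum>c\<in>{d..<k}. card H)"
    by (rule sum_mono, rule card_mono[OF finH]) (auto simp: H_def)
  finally have cW: "card W \<le> (\<Sum>c<d. card (T c)) + (k - d) * card H" by simp
  define m where "m = real (card H) powr (1/g)"
  have m0: "0 \<le> m" unfolding m_def by simp
  have mg: "m powr g = real (card H)" unfolding m_def using g(1)
    by (simp add: powr_powr)
  have mu: "m \<le> u c" for c
  proof -
    have "real (card H) \<le> u c powr g"
      using IH[of c] card_mono[of "T c \<union> H" H] finT finH by force
    then have "m \<le> (u c powr g) powr (1/g)" unfolding m_def using g(1)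
      by (intro powr_mono2) auto
    also have "\<dots> = u c" using g(1) by (simp add: powr_powr u_def)
    finally show ?thesis .
  qed
  have "real (card W) \<le> (\<Sum>c<d. real (card (T c))) + (real k - real d) * real (card H)"
  proof -
    have "real (card W) \<le> real ((\<Sum>c<d. card (T c)) + (k - d) * card H)" using cW by linarith
    then show ?thesis using d(2) by (simp add: of_nat_diff)
  qed
  also have "\<dots> \<le> (\<Sum>c<d. u c powr g) + (real k - real d) * m powr g"
  proof -
    have "real (card (T c)) \<le> u c powr g" for c
      using IH[of c] card_mono[of "T c \<union> H" "T c"] finT finH by force
    then show ?thesis using mg by (simp add: sum_mono)
  qed
  also have "\<dots> \<le> (\<Sum>c<d. u c) powr g"
    by (rule key_ineq[where d=d]) (use m0 mu g d in auto)
  also have "(\<Sum>c<d. u c) = real (card (UU d (Suc n) W))"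
    unfolding cardUU u_def by simp
  finally show ?case .
qed


definition tup :: "nat \<Rightarrow> nat \<Rightarrow> nat \<Rightarrow> nat" where
  "tup a0 a1 = (\<lambda>i. if i = 0 then a0 else if i = 1 then a1 else undefined)"

lemma tup_PiE: "a0 < m 0 \<Longrightarrow> a1 < m 1 \<Longrightarrow> tup a0 a1 \<in> (\<Pi>\<^sub>E i\<in>{..<2}. {..<m i})"
  unfolding tup_def by (auto simp: PiE_iff extensional_def numeral_2_eq_2 less_Suc_eq)

lemma tup_simps[simp]: "tup a0 a1 0 = a0" "tup a0 a1 (Suc 0) = a1"
  unfolding tup_def by auto

lemma dist_neq: "distinguishable G x y \<Longrightarrow> x \<noteq> y"
  unfolding distinguishable_def by auto

lemma upper_vec:
  fixes d k n :: nat and g :: real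
  assumes d: "1 \<le> d" "d \<le> k" and g: "1 \<le> g" "real d powr g = real k"
  assumes F: "feasible_vec {0..<k} (\<lambda>i. if i = 0 then (\<lambda>a b. a \<in> {0..<k} \<and> b \<in> {0..<k} \<and> a \<noteq> b \<and> (a \<notin> {0..<d} \<or> b \<notin> {0..<d})) else (\<lambda>a b. False)) 2 n m"
  shows "real (m 0) * real (m 1) powr (1/g) \<le> real d ^ n"
proof -
  let ?G = "(\<lambda>i. if i = 0 then (\<lambda>a b. a \<in> {0..<k} \<and> b \<in> {0..<k} \<and> a \<noteq> b \<and> (a \<notin> {0..<d} \<or> b \<notin> {0..<d})) else (\<lambda>a b. False))"
  let ?P = "(\<Pi>\<^sub>E i\<in>{..<2}. {..<m i})"
  obtain E where Ew: "\<forall>a\<in>?P. E a \<in> words {0..<k} n"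
    and Ed: "\<forall>i<2. \<forall>a\<in>?P. \<forall>a'\<in>?P. a i \<noteq> a' i \<longrightarrow> distinguishable (?G i) (E a) (E a')"
    using F unfolding feasible_vec_def by blast
  define W where "W a0 = (\<lambda>a1. E (tup a0 a1)) ` {..<m 1}" for a0
  have Wk: "a0 < m 0 \<Longrightarrow> W a0 \<subseteq> words {0..<k} n" for a0
    unfolding W_def using Ew tup_PiE by auto
  have cW: "a0 < m 0 \<Longrightarrow> card (W a0) = m 1" for a0
    unfolding W_def
  proof (subst card_image)
    assume a0: "a0 < m 0"
    show "inj_on (\<lambda>a1. E (tup a0 a1)) {..<m 1}"
    proof (rule inj_onI)
      fix x y assume "x \<in> {..<m 1}" "y \<in> {..<m 1}" and eq: "E (tup a0 x) = E (tup a0 y)"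
      show "x = y"
      proof (rule ccontr)
        assume "x \<noteq> y"
        have A: "tup a0 x \<in> ?P" and B: "tup a0 y \<in> ?P" using tup_PiE[of a0 m x] tup_PiE[of a0 m y] \<open>x \<in> {..<m 1}\<close> \<open>y \<in> {..<m 1}\<close> a0 by simp_all
        then have "distinguishable (\<lambda>a b. False) (E (tup a0 x)) (E (tup a0 y))"
          using Ed[rule_format, OF _ A B, of 1] \<open>x \<noteq> y\<close> by simp
        then show False using dist_neq eq by blast
      qed
    qed
  qed simp
  have lowU: "a0 < m 0 \<Longrightarrow> real (m 1) powr (1/g) \<le> real (card (UU d n (W a0)))" for a0
  proof -
    assume a0: "a0 < m 0"
    have "real (m 1) \<le> real (card (UU d n (W a0))) powr g"
      using comb[OF d g Wk[OF a0]] cW[OF a0] by simp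
    then have "real (m 1) powr (1/g) \<le> (real (card (UU d n (W a0))) powr g) powr (1/g)"
      using g by (intro powr_mono2) auto
    also have "\<dots> = real (card (UU d n (W a0)))" using g by (simp add: powr_powr)
    finally show ?thesis .
  qed
  have disj: "UU d n (W a) \<inter> UU d n (W b) = {}" if ab: "a < m 0" "b < m 0" "a \<noteq> b" for a b
  proof (rule ccontr)
    assume "UU d n (W a) \<inter> UU d n (W b) \<noteq> {}"
    then obtain z x y where x: "x \<in> W a" "\<forall>t<n. x!t < d \<longrightarrow> z!t = x!t"
      and y: "y \<in> W b" "\<forall>t<n. y!t < d \<longrightarrow> z!t = y!t"
      unfolding UU_def by blast
    obtain a1 b1 where a1: "a1 < m 1" "x = E (tup a a1)" and b1: "b1 < m 1" "y = E (tup b b1)"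
      using x(1) y(1) unfolding W_def by auto
    have "distinguishable (?G 0) x y"
    proof -
      have A: "tup a a1 \<in> ?P" and B: "tup b b1 \<in> ?P" using tup_PiE[of a m a1] tup_PiE[of b m b1] a1 b1 ab by simp_all
      then show ?thesis using Ed[rule_format, OF _ A B, of 0] a1(2) b1(2) ab(3) by simp
    qed
    then obtain t where t: "t < min (length x) (length y)" "x!t \<noteq> y!t" "\<not> ?G 0 (x!t) (y!t)"
      unfolding distinguishable_def by blast
    have xw: "x \<in> words {0..<k} n" "y \<in> words {0..<k} n" using Wk ab x(1) y(1) by auto
    then have "x!t < k" "y!t < k" "t < n" using t(1) nth_mem[of t x] nth_mem[of t y] unfolding words_def
      by (auto simp: subset_iff)
    then have "x!t < d" "y!t < d" using t(2,3) by simp_all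
    then show False using x(2) y(2) t \<open>t < n\<close> by auto
  qed
  have "real (m 0) * real (m 1) powr (1/g) = (\<Sum>a<m 0. real (m 1) powr (1/g))" by simp
  also have "\<dots> \<le> (\<Sum>a<m 0. real (card (UU d n (W a))))" by (rule sum_mono) (use lowU in auto)
  also have "\<dots> = real (card (\<Union>a<m 0. UU d n (W a)))"
  proof -
    have fin: "finite (UU d n X)" for X
      by (rule finite_subset[of _ "words {0..<d} n"]) (auto simp: UU_def finite_words)
    show ?thesis by (subst card_UN_disjoint) (use fin disj in auto)
  qed
  also have "\<dots> \<le> real (card (words {0..<d} n))"
    by (subst of_nat_le_iff, rule card_mono) (auto simp: finite_words UU_def)
  also have "\<dots> = real d ^ n" by (simp add: card_words)
  finally show ?thesis .
qed


lemma rate_bound: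
  fixes d k :: nat and R1 R2 :: real
  assumes d: "2 \<le> d" "d \<le> k"
  assumes F: "feasible_rate2 {0..<k} (\<lambda>a b. a \<in> {0..<k} \<and> b \<in> {0..<k} \<and> a \<noteq> b \<and> (a \<notin> {0..<d} \<or> b \<notin> {0..<d})) (\<lambda>a b. False) R1 R2"
  shows "R1 + (ln d / ln k) * R2 \<le> log 2 d"
proof -
  define g where "g = ln k / ln d"
  have lnd: "0 < ln (real d)" using d by simp
  have lnk: "ln (real d) \<le> ln (real k)" using d by simp
  have g1: "1 \<le> g" unfolding g_def using lnd lnk by simp
  have gk: "real d powr g = real k" unfolding g_def powr_def using lnd d by simp
  have ig: "1/g = ln d / ln k" unfolding g_def by simp
  obtain len :: "nat \<Rightarrow> nat" and M where len: "filterlim len at_top sequentially"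
    and FV: "\<And>j. feasible_vec {0..<k} (\<lambda>i. if i = 0 then (\<lambda>a b. a \<in> {0..<k} \<and> b \<in> {0..<k} \<and> a \<noteq> b \<and> (a \<notin> {0..<d} \<or> b \<notin> {0..<d})) else (\<lambda>a b. False)) 2 (len j) (M j)"
    and L: "\<forall>i<2. (\<lambda>j. log 2 (real (M j i)) / real (len j)) \<longlonglongrightarrow> (if i = 0 then R1 else R2)"
    using F unfolding feasible_rate2_def feasible_rate_def by blast
  have L0: "(\<lambda>j. log 2 (real (M j 0)) / real (len j)) \<longlonglongrightarrow> R1" using L[rule_format, of 0] by simp
  have L1: "(\<lambda>j. log 2 (real (M j 1)) / real (len j)) \<longlonglongrightarrow> R2" using L[rule_format, of 1] by simp
  have lim: "(\<lambda>j. log 2 (real (M j 0)) / real (len j) + (1/g) * (log 2 (real (M j 1)) / real (len j))) \<longlonglongrightarrow> R1 + (1/g) * R2"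
    by (intro tendsto_intros L0 L1)
  have ev: "eventually (\<lambda>j. len j \<ge> 1) sequentially" using len by (simp add: filterlim_at_top)
  have bnd: "log 2 (real (M j 0)) / real (len j) + (1/g) * (log 2 (real (M j 1)) / real (len j)) \<le> log 2 d"
    if j: "len j \<ge> 1" for j
  proof -
    have pos: "0 < M j 0" "0 < M j 1" using FV[of j] unfolding feasible_vec_def by auto
    have ub: "real (M j 0) * real (M j 1) powr (1/g) \<le> real d ^ len j"
      by (rule upper_vec[OF _ d(2) g1 gk FV[of j]]) (use d in simp)
    have "log 2 (real (M j 0) * real (M j 1) powr (1/g)) \<le> log 2 (real d ^ len j)"
      using ub pos by (intro log_mono) auto
    then have "log 2 (real (M j 0)) + (1/g) * log 2 (real (M j 1)) \<le> real (len j) * log 2 d"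
      using pos by (simp add: log_mult_pos log_powr log_nat_power)
    then have "(log 2 (real (M j 0)) + (1/g) * log 2 (real (M j 1))) / real (len j) \<le> log 2 d"
      using j by (simp add: divide_le_eq mult.commute)
    then show ?thesis by (simp add: add_divide_distrib)
  qed
  have "R1 + (1/g) * R2 \<le> log 2 d"
    by (rule tendsto_upperbound[OF lim]) (use ev bnd in \<open>auto elim: eventually_mono\<close>)
  then show ?thesis using ig by simp
qed


lemma achieve_vec:
  fixes d k n n1 :: nat
  assumes d: "2 \<le> d" "d \<le> k" and n1: "n1 \<le> n"
  shows "feasible_vec {0..<k} (\<lambda>i. if i = 0 then (\<lambda>a b. a \<in> {0..<k} \<and> b \<in> {0..<k} \<and> a \<noteq> b \<and> (a \<notin> {0..<d} \<or> b \<notin> {0..<d})) else (\<lambda>a b. False)) 2 n (\<lambda>i. if i = 0 then d ^ n1 else k ^ (n - n1))"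
proof -
  let ?m = "(\<lambda>i. if i = 0 then d ^ n1 else k ^ (n - n1))"
  let ?P = "(\<Pi>\<^sub>E i\<in>{..<2::nat}. {..<?m i})"
  obtain e1 where e1: "bij_betw e1 {0..<card (words {0..<d} n1)} (words {0..<d} n1)"
    using ex_bij_betw_nat_finite[OF finite_words[of "{0..<d}" n1]] by auto
  obtain e2 where e2: "bij_betw e2 {0..<card (words {0..<k} (n - n1))} (words {0..<k} (n - n1))"
    using ex_bij_betw_nat_finite[OF finite_words[of "{0..<k}" "n - n1"]] by auto
  have c1: "card (words {0..<d} n1) = d ^ n1" by (simp add: card_words)
  have c2: "card (words {0..<k} (n - n1)) = k ^ (n - n1)" by (simp add: card_words)
  define E where "E a = e1 (a 0) @ e2 (a 1)" for a :: "nat \<Rightarrow> nat"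
  have e1w: "a < d ^ n1 \<Longrightarrow> e1 a \<in> words {0..<d} n1" for a
    using bij_betwE[OF e1] c1 by auto
  have e2w: "a < k ^ (n - n1) \<Longrightarrow> e2 a \<in> words {0..<k} (n - n1)" for a
    using bij_betwE[OF e2] c2 by auto
  have e1i: "a < d ^ n1 \<Longrightarrow> b < d ^ n1 \<Longrightarrow> a \<noteq> b \<Longrightarrow> e1 a \<noteq> e1 b" for a b
    using inj_onD[OF bij_betw_imp_inj_on[OF e1], of a b] c1 by auto
  have e2i: "a < k ^ (n - n1) \<Longrightarrow> b < k ^ (n - n1) \<Longrightarrow> a \<noteq> b \<Longrightarrow> e2 a \<noteq> e2 b" for a b
    using inj_onD[OF bij_betw_imp_inj_on[OF e2], of a b] c2 by auto
  have mem: "a \<in> ?P \<Longrightarrow> a 0 < d ^ n1 \<and> a 1 < k ^ (n - n1)" for a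
    by (auto simp: PiE_iff dest: bspec[of _ _ 0] bspec[of _ _ 1])
  show ?thesis
    unfolding feasible_vec_def
  proof (intro conjI exI[of _ E] ballI allI impI)
    fix i :: nat assume "i < 2" then show "0 < ?m i" using d by auto
  next
    fix a assume a: "a \<in> ?P"
    show "E a \<in> words {0..<k} n"
      using e1w[of "a 0"] e2w[of "a 1"] mem[OF a] d n1 unfolding E_def words_def by auto
  next
    fix i :: nat and a a' assume i: "i < 2" and a: "a \<in> ?P" and a': "a' \<in> ?P" and ne: "a i \<noteq> a' i"
    have w1: "e1 (a 0) \<in> words {0..<d} n1" "e1 (a' 0) \<in> words {0..<d} n1"
      using e1w mem a a' by auto
    have w2: "e2 (a 1) \<in> words {0..<k} (n - n1)" "e2 (a' 1) \<in> words {0..<k} (n - n1)"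
      using e2w mem a a' by auto
    have len1: "length (e1 (a 0)) = n1" "length (e1 (a' 0)) = n1" using w1 unfolding words_def by auto
    have len2: "length (e2 (a 1)) = n - n1" "length (e2 (a' 1)) = n - n1" using w2 unfolding words_def by auto
    consider "i = 0" | "i = 1" using i by linarith
    then show "distinguishable ((\<lambda>i. if i = 0 then (\<lambda>a b. a \<in> {0..<k} \<and> b \<in> {0..<k} \<and> a \<noteq> b \<and> (a \<notin> {0..<d} \<or> b \<notin> {0..<d})) else (\<lambda>a b. False)) i) (E a) (E a')"
    proof cases
      case 1
      have "e1 (a 0) \<noteq> e1 (a' 0)" using e1i mem a a' ne 1 by auto
      then obtain t where t: "t < n1" "e1 (a 0) ! t \<noteq> e1 (a' 0) ! t"
        using len1 by (auto simp: list_eq_iff_nth_eq)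
      have "e1 (a 0) ! t < d" "e1 (a' 0) ! t < d"
        using w1 len1 t(1) nth_mem[of t "e1 (a 0)"] nth_mem[of t "e1 (a' 0)"] unfolding words_def
        by (auto simp: subset_iff)
      then show ?thesis using 1 t len1 len2 n1 unfolding distinguishable_def E_def
        by (intro exI[of _ t]) (auto simp: nth_append)
    next
      case 2
      have "e2 (a 1) \<noteq> e2 (a' 1)" using e2i mem a a' ne 2 by auto
      then obtain t where t: "t < n - n1" "e2 (a 1) ! t \<noteq> e2 (a' 1) ! t"
        using len2 by (auto simp: list_eq_iff_nth_eq)
      have "E a ! (n1 + t) = e2 (a 1) ! t" "E a' ! (n1 + t) = e2 (a' 1) ! t"
        unfolding E_def using len1 by (metis nth_append_length_plus)+
      then show ?thesis using 2 t len1 len2 n1 unfolding distinguishable_def E_def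
        by (intro exI[of _ "n1 + t"]) auto
    qed
  qed
qed


lemma floor_ratio:
  fixes \<alpha> :: real assumes "0 \<le> \<alpha>"
  shows "(\<lambda>j::nat. real (nat \<lfloor>\<alpha> * real j\<rfloor>) / real j) \<longlonglongrightarrow> \<alpha>"
proof (rule tendsto_sandwich[of "\<lambda>j. \<alpha> - 1 / real j" _ _ "\<lambda>j. \<alpha>"])
  show "(\<lambda>j. \<alpha> - 1 / real j) \<longlonglongrightarrow> \<alpha>"
    using tendsto_diff[OF tendsto_const lim_1_over_n, of \<alpha>] by simp
  show "(\<lambda>j. \<alpha>) \<longlonglongrightarrow> \<alpha>" by simp
  have r: "real (nat \<lfloor>\<alpha> * real j\<rfloor>) = real_of_int \<lfloor>\<alpha> * real j\<rfloor>" for j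
    using assms by simp
  show "eventually (\<lambda>j. \<alpha> - 1 / real j \<le> real (nat \<lfloor>\<alpha> * real j\<rfloor>) / real j) sequentially"
  proof (rule eventually_sequentiallyI[of 1])
    fix j :: nat assume j: "1 \<le> j"
    have "\<alpha> * real j - 1 \<le> real_of_int \<lfloor>\<alpha> * real j\<rfloor>" by linarith
    then have "(\<alpha> * real j - 1) / real j \<le> real_of_int \<lfloor>\<alpha> * real j\<rfloor> / real j"
      by (rule divide_right_mono) simp
    moreover have "(\<alpha> * real j - 1) / real j = \<alpha> - 1 / real j" using j by (simp add: field_simps)
    ultimately show "\<alpha> - 1 / real j \<le> real (nat \<lfloor>\<alpha> * real j\<rfloor>) / real j"
      using r by simp
  qed
  show "eventually (\<lambda>j. real (nat \<lfloor>\<alpha> * real j\<rfloor>) / real j \<le> \<alpha>) sequentially"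
  proof (rule eventually_sequentiallyI[of 1])
    fix j :: nat assume j: "1 \<le> j"
    have "real_of_int \<lfloor>\<alpha> * real j\<rfloor> \<le> \<alpha> * real j" by linarith
    then show "real (nat \<lfloor>\<alpha> * real j\<rfloor>) / real j \<le> \<alpha>"
      using j r by (simp add: field_simps)
  qed
qed

theorem theorem7:
  fixes d k :: nat and \<alpha> :: real
  assumes "2 \<le> d" and "d \<le> k" and "0 \<le> \<alpha>" and "\<alpha> \<le> 1"
  shows "optimal2 {0..<k}
           (\<lambda>a b. a \<in> {0..<k} \<and> b \<in> {0..<k} \<and> a \<noteq> b \<and> (a \<notin> {0..<d} \<or> b \<notin> {0..<d}))
           (\<lambda>a b. False)
           (\<alpha> * log 2 d) ((1 - \<alpha>) * log 2 k)"
proof -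
  let ?G1 = "(\<lambda>a b. a \<in> {0..<k} \<and> b \<in> {0..<k} \<and> a \<noteq> b \<and> (a \<notin> {0..<d} \<or> b \<notin> {0..<d}))"
  have lnd: "0 < ln (real d)" using assms by simp
  have lnk: "0 < ln (real k)" using assms by simp
  have conv: "(ln d / ln k) * log 2 k = log 2 d" using lnk by (simp add: log_def)
  define f where "f j = nat \<lfloor>\<alpha> * real j\<rfloor>" for j :: nat
  have fj: "f j \<le> j" for j
  proof -
    have "\<alpha> * real j \<le> real j" using assms by (simp add: mult_left_le_one_le)
    then show ?thesis unfolding f_def by linarith
  qed
  have flim: "(\<lambda>j. real (f j) / real j) \<longlonglongrightarrow> \<alpha>" unfolding f_def using floor_ratio assms by simp
  have feas: "feasible_rate2 {0..<k} ?G1 (\<lambda>a b. False) (\<alpha> * log 2 d) ((1 - \<alpha>) * log 2 k)"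
    unfolding feasible_rate2_def feasible_rate_def
  proof (intro exI[of _ "\<lambda>j. j"] exI[of _ "\<lambda>j i. if i = 0 then d ^ f j else k ^ (j - f j)"] conjI allI impI)
    show "filterlim (\<lambda>j. j) at_top sequentially" by (rule filterlim_ident)
    fix j show "feasible_vec {0..<k} (\<lambda>i. if i = 0 then ?G1 else (\<lambda>a b. False)) 2 j (\<lambda>i. if i = 0 then d ^ f j else k ^ (j - f j))"
      using achieve_vec[OF assms(1,2) fj[of j]] by simp
  next
    fix i :: nat assume i: "i < 2"
    have A: "(\<lambda>j. log 2 (real (d ^ f j)) / real j) \<longlonglongrightarrow> \<alpha> * log 2 d"
    proof -
      have "(\<lambda>j. real (f j) / real j * log 2 d) \<longlonglongrightarrow> \<alpha> * log 2 d"
        by (intro tendsto_intros flim)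
      moreover have "log 2 (real (d ^ f j)) / real j = real (f j) / real j * log 2 d" for j
      proof -
        have "log 2 (real (d ^ f j)) = real (f j) * log 2 d"
          unfolding of_nat_power by (rule log_nat_power) simp
        then show ?thesis by simp
      qed
      ultimately show ?thesis by (simp only:)
    qed
    have B: "(\<lambda>j. log 2 (real (k ^ (j - f j))) / real j) \<longlonglongrightarrow> (1 - \<alpha>) * log 2 k"
    proof -
      have "(\<lambda>j. (1 - real (f j) / real j) * log 2 k) \<longlonglongrightarrow> (1 - \<alpha>) * log 2 k"
        by (intro tendsto_intros flim)
      then have "(\<lambda>j. log 2 (real (k ^ (j - f j))) / real j) \<longlonglongrightarrow> (1 - \<alpha>) * log 2 k"
      proof (rule Lim_transform_eventually)
        show "eventually (\<lambda>j. (1 - real (f j) / real j) * log 2 k = log 2 (real (k ^ (j - f j))) / real j) sequentially"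
        proof (rule eventually_sequentiallyI[of 1])
          fix j :: nat assume j: "1 \<le> j"
          show "(1 - real (f j) / real j) * log 2 k = log 2 (real (k ^ (j - f j))) / real j"
            using j fj[of j] by (simp add: log_nat_power of_nat_diff field_simps)
        qed
      qed
      then show ?thesis .
    qed
    show "(\<lambda>j. log 2 (real (if i = 0 then d ^ f j else k ^ (j - f j))) / real j) \<longlonglongrightarrow>
          (if i = 0 then \<alpha> * log 2 d else (1 - \<alpha>) * log 2 k)"
      using A B by (cases "i = 0") simp_all
  qed
  have no1: "\<not> (\<exists>R1'. R1' > \<alpha> * log 2 d \<and> feasible_rate2 {0..<k} ?G1 (\<lambda>a b. False) R1' ((1 - \<alpha>) * log 2 k))"
  proof
    assume "\<exists>R1'. R1' > \<alpha> * log 2 d \<and> feasible_rate2 {0..<k} ?G1 (\<lambda>a b. False) R1' ((1 - \<alpha>) * log 2 k)"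
    then obtain R1' where R: "R1' > \<alpha> * log 2 d" "feasible_rate2 {0..<k} ?G1 (\<lambda>a b. False) R1' ((1 - \<alpha>) * log 2 k)" by blast
    have "R1' + (ln d / ln k) * ((1 - \<alpha>) * log 2 k) \<le> log 2 d"
      by (rule rate_bound[OF assms(1,2) R(2)])
    also have "(ln d / ln k) * ((1 - \<alpha>) * log 2 k) = (1 - \<alpha>) * log 2 d"
      using conv by (metis mult.left_commute)
    finally show False using R(1) by (simp add: algebra_simps)
  qed
  have no2: "\<not> (\<exists>R2'. R2' > (1 - \<alpha>) * log 2 k \<and> feasible_rate2 {0..<k} ?G1 (\<lambda>a b. False) (\<alpha> * log 2 d) R2')"
  proof
    assume "\<exists>R2'. R2' > (1 - \<alpha>) * log 2 k \<and> feasible_rate2 {0..<k} ?G1 (\<lambda>a b. False) (\<alpha> * log 2 d) R2'"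
    then obtain R2' where R: "R2' > (1 - \<alpha>) * log 2 k" "feasible_rate2 {0..<k} ?G1 (\<lambda>a b. False) (\<alpha> * log 2 d) R2'" by blast
    have b: "\<alpha> * log 2 d + (ln d / ln k) * R2' \<le> log 2 d"
      by (rule rate_bound[OF assms(1,2) R(2)])
    have pos: "0 < ln d / ln k" using lnd lnk by simp
    have "(ln d / ln k) * ((1 - \<alpha>) * log 2 k) < (ln d / ln k) * R2'"
      using R(1) pos by (rule mult_strict_left_mono)
    also have "(ln d / ln k) * ((1 - \<alpha>) * log 2 k) = (1 - \<alpha>) * log 2 d"
      using conv by (metis mult.left_commute)
    finally show False using b by (simp add: algebra_simps)
  qed
  show ?thesis unfolding optimal2_def using feas no1 no2 by blast
qed

end
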